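(* For any positive integers $q,z,m,t$ with $q\geq 2$, $z<q$ and $t<m$, there exists a $\big(\binom{m}{t}q^t\lfloor\frac{q-1}{q-z}\rfloor^t,\ q^m,\ q^m-(q-z)^tq^{m-t},\ (q-z)^tq^m\big)$ placement delivery array. In particular there is a corresponding coded caching scheme with $\frac{M}{N}=1-(\frac{q-z}{q})^t$ and rate $R=(q-z)^t$.
   Context: A $(K,F,Z,S)$ placement delivery array (PDA) is an $F\times K$ array whose entries are either a special symbol $*$ or one of $S$ distinct non-star symbols (identified with $1,\ldots,S$), such that: (C1) $*$ appears exactly $Z$ times in each column; (C2) each of the $S$ symbols occurs at least once; (C3) for any two distinct entries $p_{j_1,k_1}=p_{j_2,k_2}=s$ with $s$ a non-star symbol, we have $j_1\neq j_2$, $k_1\neq k_2$, and $p_{j_1,k_2}=p_{j_2,k_1}=*$. A $(K,F,Z,S)$ PDA yields an $F$-division coded caching scheme for $K$ users with memory ratio $M/N=Z/F$ and rate $R=S/F$. *)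

theory Defs
  imports Main
begin

text \<open>A (K,F,Z,S) placement delivery array: an F x K array P, where entry P j k
  (row j < F, column k < K) is None for the star symbol and Some s for the
  non-star symbol s, with s ranging over {1..S}.\<close>

definition is_PDA :: "nat \<Rightarrow> nat \<Rightarrow> nat \<Rightarrow> nat \<Rightarrow> (nat \<Rightarrow> nat \<Rightarrow> nat option) \<Rightarrow> bool" where
  "is_PDA K F Z S P \<longleftrightarrow>
     (\<forall>j<F. \<forall>k<K. \<forall>s. P j k = Some s \<longrightarrow> s \<in> {1..S}) \<and>
     (\<forall>k<K. card {j. j < F \<and> P j k = None} = Z) \<and>
     (\<forall>s\<in>{1..S}. \<exists>j<F. \<exists>k<K. P j k = Some s) \<and>
     (\<forall>j1<F. \<forall>k1<K. \<forall>j2<F. \<forall>k2<K. \<forall>s.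
        (j1, k1) \<noteq> (j2, k2) \<and> P j1 k1 = Some s \<and> P j2 k2 = Some s \<longrightarrow>
        j1 \<noteq> j2 \<and> k1 \<noteq> k2 \<and> P j1 k2 = None \<and> P j2 k1 = None)"

end

theory Submission
  imports Defs "HOL-Library.FuncSet"
begin

definition offq :: "nat \<Rightarrow> nat \<Rightarrow> nat \<Rightarrow> nat" where
  "offq q u x = (if u \<le> x then x - u else x + q - u)"
definition addq :: "nat \<Rightarrow> nat \<Rightarrow> nat \<Rightarrow> nat" where
  "addq q u w = (if u + w < q then u + w else u + w - q)"

lemma off_add: "u < q \<Longrightarrow> w < q \<Longrightarrow> offq q u (addq q u w) = w"
  by (auto simp: offq_def addq_def)
lemma add_off: "u < q \<Longrightarrow> x < q \<Longrightarrow> addq q u (offq q u x) = x"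
  by (auto simp: offq_def addq_def)
lemma add_lt: "u < q \<Longrightarrow> w < q \<Longrightarrow> addq q u w < q"
  by (auto simp: addq_def)
lemma off_self: "offq q u u = 0"
  by (auto simp: offq_def)

lemma card_blk:
  assumes "u < q" "l * d + d < q"
  shows "card {x\<in>{..<q}. l * d < offq q u x \<and> offq q u x \<le> l * d + d} = d"
proof -
  have "{x\<in>{..<q}. l * d < offq q u x \<and> offq q u x \<le> l * d + d} = addq q u ` {l*d<..l*d+d}"
  proof (rule set_eqI, rule iffI)
    fix x assume x: "x \<in> {x\<in>{..<q}. l * d < offq q u x \<and> offq q u x \<le> l * d + d}"
    then have xq: "x < q" by simp
    have "x = addq q u (offq q u x)" using add_off[OF assms(1) xq] by simp
    moreover have "offq q u x \<in> {l*d<..l*d+d}" using x by simp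
    ultimately show "x \<in> addq q u ` {l*d<..l*d+d}" by (rule image_eqI)
  next
    fix x assume "x \<in> addq q u ` {l*d<..l*d+d}"
    then obtain w where w: "w \<in> {l*d<..l*d+d}" "x = addq q u w" by blast
    then have wq: "w < q" using assms(2) by simp
    have "offq q u x = w" using w(2) off_add[OF assms(1) wq] by simp
    moreover have "x < q" using w(2) add_lt[OF assms(1) wq] by simp
    ultimately show "x \<in> {x\<in>{..<q}. l * d < offq q u x \<and> offq q u x \<le> l * d + d}"
      using w(1) by simp
  qed
  moreover have "inj_on (addq q u) {l*d<..l*d+d}"
  proof (rule inj_onI)
    fix x y assume xy: "x \<in> {l*d<..l*d+d}" "y \<in> {l*d<..l*d+d}" "addq q u x = addq q u y"
    have "x < q" "y < q" using xy(1,2) assms(2) by simp_all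
    then show "x = y" using off_add[of u q x] off_add[of u q y] assms(1) xy(3) by metis
  qed
  ultimately show ?thesis by (simp add: card_image)
qed

lemma bij_card_filter:
  assumes "bij_betw r A B"
  shows "card {j\<in>A. Q (r j)} = card {f\<in>B. Q f}"
proof -
  have "r ` {j\<in>A. Q (r j)} = {f\<in>B. Q f}" using assms unfolding bij_betw_def by auto
  moreover have "inj_on r {j\<in>A. Q (r j)}" using assms unfolding bij_betw_def
    by (auto intro: inj_on_subset)
  ultimately show ?thesis by (metis card_image)
qed


lemma blk_disj:
  fixes l1 l2 d w :: nat
  assumes "l1 \<noteq> l2" "l1*d < w" "w \<le> l1*d+d" "l2*d < w" "w \<le> l2*d + d"
  shows False
proof (cases "l1 < l2")
  case True
  then have "Suc l1 * d \<le> l2 * d" by (intro mult_le_mono1) simp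
  then show False using assms by simp
next
  case False
  then have "l2 < l1" using assms(1) by simp
  then have "Suc l2 * d \<le> l1 * d" by (intro mult_le_mono1) simp
  then show False using assms by simp
qed

definition ns :: "nat \<Rightarrow> nat \<Rightarrow> (nat \<Rightarrow> nat) \<Rightarrow> nat set \<times> (nat \<Rightarrow> nat) \<times> (nat \<Rightarrow> nat) \<Rightarrow> bool" where
  "ns q d f c = (case c of (T,u,l) \<Rightarrow>
     (\<forall>i\<in>T. l i * d < offq q (u i) (f i) \<and> offq q (u i) (f i) \<le> l i * d + d))"

definition vv :: "nat \<Rightarrow> (nat \<Rightarrow> nat) \<Rightarrow> nat set \<times> (nat \<Rightarrow> nat) \<times> (nat \<Rightarrow> nat) \<Rightarrow> nat \<Rightarrow> nat" where
  "vv m f c = (case c of (T,u,l) \<Rightarrow> restrict (\<lambda>i. if i \<in> T then u i else f i) {..<m})"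

definition ee :: "nat \<Rightarrow> nat \<Rightarrow> (nat \<Rightarrow> nat) \<Rightarrow> nat set \<times> (nat \<Rightarrow> nat) \<times> (nat \<Rightarrow> nat) \<Rightarrow> nat \<Rightarrow> nat" where
  "ee q d f c = (case c of (T,u,l) \<Rightarrow> restrict (\<lambda>i. offq q (u i) (f i) - l i * d - 1) T)"

lemma card_ns:
  assumes T: "T \<subseteq> {..<m}" "card T = t" and u: "u \<in> PiE T (\<lambda>_. {..<q})"
    and l: "l \<in> PiE T (\<lambda>_. {..<a})" and ad: "a * d < q"
  shows "card {f \<in> PiE {..<m} (\<lambda>_. {..<q}). ns q d f (T,u,l)} = d ^ t * q ^ (m - t)"
proof -
  define B where "B = (\<lambda>i. if i \<in> T then {x\<in>{..<q}. l i * d < offq q (u i) x \<and> offq q (u i) x \<le> l i * d + d} else {..<q})"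
  have eq: "{f \<in> PiE {..<m} (\<lambda>_. {..<q}). ns q d f (T,u,l)} = PiE {..<m} B"
    using T(1) unfolding B_def ns_def by (auto simp: PiE_def Pi_def split: if_splits)
  have cB: "card (B i) = d" if "i \<in> T" for i
  proof -
    have "u i < q" "l i < a" using u l that by auto
    then have "l i * d + d \<le> a * d" using mult_le_mono1[of "Suc (l i)" a d] by simp
    then have "l i * d + d < q" using ad by simp
    then show ?thesis using that card_blk[OF \<open>u i < q\<close>] unfolding B_def by simp
  qed
  have "card (PiE {..<m} B) = (\<Prod>i\<in>{..<m}. card (B i))" by (simp add: card_PiE)
  also have "\<dots> = (\<Prod>i\<in>{..<m}. if i \<in> T then d else q)"
  proof (rule prod.cong)
    fix i assume "i \<in> {..<m}"
    show "card (B i) = (if i \<in> T then d else q)"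
    proof (cases "i \<in> T")
      case True then show ?thesis using cB by simp
    next
      case False then show ?thesis unfolding B_def by simp
    qed
  qed simp
  also have "\<dots> = (\<Prod>i\<in>{..<m} \<inter> {x. x \<in> T}. d) * (\<Prod>i\<in>{..<m} \<inter> - {x. x \<in> T}. q)"
    by (rule prod.If_cases) simp
  also have "{..<m} \<inter> {x. x \<in> T} = T" using T(1) by auto
  also have "{..<m} \<inter> - {x. x \<in> T} = {..<m} - T" by auto
  also have "(\<Prod>i\<in>T. d) * (\<Prod>i\<in>{..<m} - T. q) = d ^ t * q ^ (m - t)"
    using T by (simp add: card_Diff_subset finite_subset)
  finally show ?thesis using eq by simp
qed


lemma core:
  assumes f1: "f1 \<in> PiE {..<m} (\<lambda>_. {..<q::nat})" and f2: "f2 \<in> PiE {..<m} (\<lambda>_. {..<q})"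
    and T1: "T1 \<subseteq> {..<m}" "card T1 = t" and u1: "u1 \<in> PiE T1 (\<lambda>_. {..<q})"
    and l1: "l1 \<in> PiE T1 (\<lambda>_. {..<a})"
    and T2: "T2 \<subseteq> {..<m}" "card T2 = t" and u2: "u2 \<in> PiE T2 (\<lambda>_. {..<q})"
    and l2: "l2 \<in> PiE T2 (\<lambda>_. {..<a})"
    and ns1: "ns q d f1 (T1,u1,l1)" and ns2: "ns q d f2 (T2,u2,l2)"
    and vveq: "vv m f1 (T1,u1,l1) = vv m f2 (T2,u2,l2)"
    and eeeq: "T1 = T2 \<Longrightarrow> ee q d f1 (T1,u1,l1) = ee q d f2 (T2,u2,l2)"
    and ne: "(f1,(T1,u1,l1)) \<noteq> (f2,(T2,u2,l2))"
  shows "f1 \<noteq> f2 \<and> (T1,u1,l1) \<noteq> (T2,u2,l2) \<and> \<not> ns q d f1 (T2,u2,l2) \<and> \<not> ns q d f2 (T1,u1,l1)"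
proof -
  have vi: "(if i \<in> T1 then u1 i else f1 i) = (if i \<in> T2 then u2 i else f2 i)" if "i < m" for i
    using fun_cong[OF vveq, of i] that unfolding vv_def by simp
  have fin: "finite T1" "finite T2" using T1(1) T2(1) finite_subset by auto
  have nsb: "\<not> ns q d f2 (T1,u1,l1) \<and> \<not> ns q d f1 (T2,u2,l2) \<and> (T1,u1,l1) \<noteq> (T2,u2,l2)"
  proof (cases "T1 = T2")
    case False
    have "\<not> T1 \<subseteq> T2" using False fin T1(2) T2(2) card_subset_eq by metis
    then obtain i where i: "i \<in> T1" "i \<notin> T2" by blast
    have "\<not> T2 \<subseteq> T1" using False fin T1(2) T2(2) card_subset_eq by metis
    then obtain i' where i': "i' \<in> T2" "i' \<notin> T1" by blast
    have "u1 i = f2 i" using vi[of i] i T1(1) by auto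
    then have "offq q (u1 i) (f2 i) = 0" using off_self by metis
    then have a1: "\<not> ns q d f2 (T1,u1,l1)" using i unfolding ns_def by force
    have "u2 i' = f1 i'" using vi[of i'] i' T2(1) by auto
    then have "offq q (u2 i') (f1 i') = 0" using off_self by metis
    then have a2: "\<not> ns q d f1 (T2,u2,l2)" using i' unfolding ns_def by force
    show ?thesis using a1 a2 False by simp
  next
    case True
    then have "u1 = u2"
    proof -
      have "u1 i = u2 i" if "i \<in> T1" for i using vi[of i] that True T1(1) by auto
      then show ?thesis using u1 u2 True by (intro PiE_ext) auto
    qed
    show ?thesis
    proof (cases "l1 = l2")
      case True
      have eq: "f1 i = f2 i" if "i < m" for i
      proof (cases "i \<in> T1")
        case False then show ?thesis using vi[of i] \<open>i < m\<close> \<open>T1 = T2\<close> by simp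
      next
        case iT: True
        have "ee q d f1 (T1,u1,l1) i = ee q d f2 (T2,u2,l2) i" using eeeq \<open>T1 = T2\<close> by simp
        then have e: "offq q (u1 i) (f1 i) - l1 i * d - 1 = offq q (u1 i) (f2 i) - l1 i * d - 1"
          using iT \<open>T1 = T2\<close> \<open>u1 = u2\<close> True unfolding ee_def by simp
        have b1: "l1 i * d < offq q (u1 i) (f1 i)" using ns1 iT unfolding ns_def by simp
        have b2: "l1 i * d < offq q (u1 i) (f2 i)" using ns2 iT \<open>T1 = T2\<close> \<open>u1 = u2\<close> True
          unfolding ns_def by simp
        have oe: "offq q (u1 i) (f1 i) = offq q (u1 i) (f2 i)" using e b1 b2 by linarith
        have "u1 i < q" using u1 iT by auto
        moreover have "f1 i < q" "f2 i < q" using f1 f2 \<open>i < m\<close> by auto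
        ultimately show ?thesis using oe add_off by metis
      qed
      have "f1 = f2" using f1 f2 eq by (intro PiE_ext) auto
      then show ?thesis using ne True \<open>T1 = T2\<close> \<open>u1 = u2\<close> by simp
    next
      case False
      have "\<exists>i\<in>T1. l1 i \<noteq> l2 i"
      proof (rule ccontr)
        assume "\<not> ?thesis"
        then have "l1 = l2" using l1 l2 \<open>T1 = T2\<close> by (intro PiE_ext) auto
        then show False using False by simp
      qed
      then obtain i where i: "i \<in> T1" "l1 i \<noteq> l2 i" by blast
      have b1: "l1 i * d < offq q (u1 i) (f1 i)" "offq q (u1 i) (f1 i) \<le> l1 i * d + d"
        using ns1 i unfolding ns_def by auto
      have b2: "l2 i * d < offq q (u1 i) (f2 i)" "offq q (u1 i) (f2 i) \<le> l2 i * d + d"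
        using ns2 i \<open>T1 = T2\<close> \<open>u1 = u2\<close> unfolding ns_def by auto
      have a1: "\<not> ns q d f1 (T2,u2,l2)"
      proof
        assume "ns q d f1 (T2,u2,l2)"
        then have "l2 i * d < offq q (u1 i) (f1 i)" "offq q (u1 i) (f1 i) \<le> l2 i * d + d"
          using i \<open>T1 = T2\<close> \<open>u1 = u2\<close> unfolding ns_def by auto
        then show False using blk_disj[OF i(2) b1] by simp
      qed
      have a2: "\<not> ns q d f2 (T1,u1,l1)"
      proof
        assume "ns q d f2 (T1,u1,l1)"
        then have "l1 i * d < offq q (u1 i) (f2 i)" "offq q (u1 i) (f2 i) \<le> l1 i * d + d"
          using i unfolding ns_def by auto
        then show False using blk_disj[OF i(2)] b2 by blast
      qed
      show ?thesis using a1 a2 False by simp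
    qed
  qed
  moreover have "f1 \<noteq> f2" using nsb ns1 by auto
  ultimately show ?thesis by simp
qed


theorem theorem4:
  fixes q z m t :: nat
  assumes "q \<ge> 2" "0 < z" "z < q" "0 < t" "t < m"
  shows "\<exists>P. is_PDA ((m choose t) * q ^ t * ((q - 1) div (q - z)) ^ t)
                     (q ^ m)
                     (q ^ m - (q - z) ^ t * q ^ (m - t))
                     ((q - z) ^ t * q ^ m) P"
proof -
  define d where "d = q - z"
  define a where "a = (q - 1) div d"
  have d0: "0 < d" "d \<le> q - 1" using assms by (auto simp: d_def)
  have a1: "0 < a" unfolding a_def using d0 by (simp add: div_greater_zero_iff)
  have "a * d \<le> q - 1" unfolding a_def by (rule div_times_less_eq_dividend)
  then have ad: "a * d < q" using assms(1) by linarith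
  define R where "R = PiE {..<m} (\<lambda>_. {..<q})"
  define TS where "TS = {T. T \<subseteq> {..<m} \<and> card T = t}"
  define C where "C = (SIGMA T:TS. PiE T (\<lambda>_. {..<q}) \<times> PiE T (\<lambda>_. {..<a}))"
  define E where "E = PiE {..<t} (\<lambda>_. {..<d})"
  define K where "K = (m choose t) * q ^ t * a ^ t"
  define S where "S = d ^ t * q ^ m"
  have finTS: "finite TS"
  proof (rule finite_subset)
    show "TS \<subseteq> Pow {..<m}" unfolding TS_def by auto
  qed simp
  have finT: "finite T" if "T \<in> TS" for T using that finite_subset unfolding TS_def by auto
  have finR: "finite R" unfolding R_def by (simp add: finite_PiE)
  have cR: "card R = q ^ m" by (simp add: R_def card_PiE)
  have cTS: "card TS = m choose t" using n_subsets[of "{..<m}" t] by (simp add: TS_def)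
  have finC: "finite C" unfolding C_def using finTS finT by (intro finite_SigmaI) (simp_all add: finite_PiE)
  have "card C = (\<Sum>T\<in>TS. card (PiE T (\<lambda>_. {..<q}) \<times> PiE T (\<lambda>_. {..<a})))"
    unfolding C_def using finTS finT by (simp add: finite_PiE)
  also have "\<dots> = (\<Sum>T\<in>TS. q ^ t * a ^ t)"
  proof (rule sum.cong)
    fix T assume "T \<in> TS"
    then show "card (PiE T (\<lambda>_. {..<q}) \<times> PiE T (\<lambda>_. {..<a})) = q ^ t * a ^ t"
      using finT[of T] by (simp add: card_cartesian_product card_PiE TS_def)
  qed simp
  finally have cC: "card C = K" using cTS by (simp add: K_def)
  have memC: "(T,u,l) \<in> C \<longleftrightarrow> T \<subseteq> {..<m} \<and> card T = t \<and> u \<in> PiE T (\<lambda>_. {..<q}) \<and> l \<in> PiE T (\<lambda>_. {..<a})"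
    for T u l by (simp add: C_def TS_def)
  have finE: "finite E" unfolding E_def by (simp add: finite_PiE)
  have cE: "card E = d ^ t" by (simp add: E_def card_PiE)
  have cSy: "card (R \<times> E) = S" using cR cE by (simp add: card_cartesian_product S_def)
  obtain \<rho> where rho: "bij_betw \<rho> {..<q^m} R"
    using finite_same_card_bij[of "{..<q^m}" R] cR finR by auto
  obtain \<kappa> where kappa: "bij_betw \<kappa> {..<K} C"
    using finite_same_card_bij[of "{..<K}" C] cC finC by auto
  obtain \<sigma> where sigma: "bij_betw \<sigma> (R \<times> E) {1..S}"
    using finite_same_card_bij[of "R \<times> E" "{1..S}"] cSy finR finE by auto
  have "\<forall>T\<in>TS. \<exists>h. bij_betw h (PiE T (\<lambda>_. {..<d})) E"
  proof
    fix T assume T: "T \<in> TS"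
    have "card (PiE T (\<lambda>_. {..<d})) = card E" using T finT[OF T] cE
      by (simp add: card_PiE TS_def)
    then show "\<exists>h. bij_betw h (PiE T (\<lambda>_. {..<d})) E"
      using finite_same_card_bij finT[OF T] finE by (metis finite_PiE finite_lessThan)
  qed
  then obtain \<beta> where beta: "\<And>T. T \<in> TS \<Longrightarrow> bij_betw (\<beta> T) (PiE T (\<lambda>_. {..<d})) E"
    by (metis bchoice)
  define P where "P = (\<lambda>j k. if ns q d (\<rho> j) (\<kappa> k)
     then Some (\<sigma> (vv m (\<rho> j) (\<kappa> k), \<beta> (fst (\<kappa> k)) (ee q d (\<rho> j) (\<kappa> k)))) else None)"
  have rin: "\<rho> j \<in> R" if "j < q^m" for j using bij_betw_apply[OF rho] that by simp
  have kin: "\<kappa> k \<in> C" if "k < K" for k using bij_betw_apply[OF kappa] that by simp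
  have symin: "vv m f (T,u,l) \<in> R \<and> ee q d f (T,u,l) \<in> PiE T (\<lambda>_. {..<d})"
    if "f \<in> R" "(T,u,l) \<in> C" "ns q d f (T,u,l)" for f T u l
  proof
    have mc: "T \<subseteq> {..<m}" "u \<in> PiE T (\<lambda>_. {..<q})" using that(2) by (simp_all add: memC)
    show "vv m f (T,u,l) \<in> R" unfolding R_def vv_def prod.case restrict_PiE_iff
    proof (intro ballI)
      fix i assume i: "i \<in> {..<m}"
      show "(if i \<in> T then u i else f i) \<in> {..<q}"
      proof (cases "i \<in> T")
        case True then show ?thesis using mc(2) by (simp add: PiE_iff)
      next
        case False then show ?thesis using that(1) i unfolding R_def by (simp add: PiE_iff)
      qed
    qed
    show "ee q d f (T,u,l) \<in> PiE T (\<lambda>_. {..<d})"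
      unfolding ee_def
    proof (simp only: prod.case restrict_PiE_iff, intro ballI)
      fix i assume "i \<in> T"
      then have "l i * d < offq q (u i) (f i)" "offq q (u i) (f i) \<le> l i * d + d"
        using that(3) unfolding ns_def by auto
      then show "offq q (u i) (f i) - l i * d - 1 \<in> {..<d}" by auto
    qed
  qed
  have symin2: "(vv m (\<rho> j) (\<kappa> k), \<beta> (fst (\<kappa> k)) (ee q d (\<rho> j) (\<kappa> k))) \<in> R \<times> E"
    if "j < q^m" "k < K" "ns q d (\<rho> j) (\<kappa> k)" for j k
  proof -
    obtain T u l where c: "\<kappa> k = (T,u,l)" by (metis prod_cases3)
    have "(T,u,l) \<in> C" using kin[OF that(2)] c by simp
    then have "T \<in> TS" by (simp add: memC TS_def)
    then show ?thesis using symin[OF rin[OF that(1)] \<open>(T,u,l) \<in> C\<close>] that(3) c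
      bij_betw_apply[OF beta[OF \<open>T \<in> TS\<close>]] by auto
  qed
  have "is_PDA K (q^m) (q^m - d^t * q^(m-t)) S P"
    unfolding is_PDA_def
  proof (intro conjI)
    show "\<forall>j<q^m. \<forall>k<K. \<forall>s. P j k = Some s \<longrightarrow> s \<in> {1..S}"
    proof (intro allI impI)
      fix j k s assume jk: "j < q^m" "k < K" "P j k = Some s"
      then have "ns q d (\<rho> j) (\<kappa> k)" by (auto simp: P_def split: if_splits)
      then show "s \<in> {1..S}" using jk symin2[OF jk(1,2)] bij_betw_apply[OF sigma]
        by (auto simp: P_def)
    qed
  next
    show "\<forall>k<K. card {j. j < q^m \<and> P j k = None} = q^m - d^t * q^(m-t)"
    proof (intro allI impI)
      fix k assume k: "k < K"
      obtain T u l where c: "\<kappa> k = (T,u,l)" by (metis prod_cases3)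
      have cC: "(T,u,l) \<in> C" using kin[OF k] c by simp
      have eq: "{j. j < q^m \<and> P j k = None} = {..<q^m} - {j\<in>{..<q^m}. ns q d (\<rho> j) (\<kappa> k)}"
        by (auto simp: P_def)
      have "card {j\<in>{..<q^m}. ns q d (\<rho> j) (\<kappa> k)} = card {f\<in>R. ns q d f (\<kappa> k)}"
        by (rule bij_card_filter[OF rho])
      also have "\<dots> = d^t * q^(m-t)" unfolding c R_def
        using cC unfolding memC by (intro card_ns[OF _ _ _ _ ad]) simp_all
      finally show "card {j. j < q^m \<and> P j k = None} = q^m - d^t * q^(m-t)"
        unfolding eq by (subst card_Diff_subset) auto
    qed
  next
    show "\<forall>s\<in>{1..S}. \<exists>j<q^m. \<exists>k<K. P j k = Some s"
    proof
      fix s assume s: "s \<in> {1..S}"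
      then have "s \<in> \<sigma> ` (R \<times> E)" using sigma unfolding bij_betw_def by simp
      then obtain y where y: "y \<in> R \<times> E" "\<sigma> y = s" by (metis imageE)
      obtain v e where ve: "y = (v,e)" by (cases y)
      have v: "v \<in> R" and e: "e \<in> E" using y ve by auto
      define T0 where "T0 = {..<t}"
      have T0: "T0 \<in> TS" unfolding T0_def TS_def using assms by auto
      define e' where "e' = inv_into (PiE T0 (\<lambda>_. {..<d})) (\<beta> T0) e"
      have e'in: "e' \<in> PiE T0 (\<lambda>_. {..<d})" unfolding e'_def
        using bij_betw_apply[OF bij_betw_inv_into[OF beta[OF T0]]] e by simp
      have be': "\<beta> T0 e' = e" unfolding e'_def
        using bij_betw_inv_into_right[OF beta[OF T0] e] .
      define u where "u = restrict v T0"
      define l where "l = restrict (\<lambda>_. 0::nat) T0"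
      have vq: "v i < q" if "i < m" for i using v that unfolding R_def by auto
      have "u \<in> PiE T0 (\<lambda>_. {..<q})" unfolding u_def restrict_PiE_iff T0_def
        using vq assms(5) by simp
      moreover have "l \<in> PiE T0 (\<lambda>_. {..<a})" unfolding l_def restrict_PiE_iff using a1 by simp
      ultimately have cC: "(T0,u,l) \<in> C" unfolding memC using T0 unfolding TS_def by simp
      define f where "f = restrict (\<lambda>i. if i < t then addq q (v i) (e' i + 1) else v i) {..<m}"
      have e'q: "e' i + 1 < q" if "i < t" for i
      proof -
        have "e' i < d" using e'in that unfolding T0_def by (simp add: PiE_iff)
        then show ?thesis using d0 by linarith
      qed
      have fR: "f \<in> R" unfolding f_def R_def restrict_PiE_iff
      proof (intro ballI)
        fix i assume i: "i \<in> {..<m}"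
        show "(if i < t then addq q (v i) (e' i + 1) else v i) \<in> {..<q}"
          using add_lt[OF vq e'q] vq i by simp
      qed
      have offe: "offq q (u i) (f i) = e' i + 1" if "i < t" for i
        using off_add[OF vq e'q[OF that]] that assms(5) unfolding f_def u_def T0_def by auto
      have nsf: "ns q d f (T0,u,l)" unfolding ns_def prod.case
      proof (intro ballI)
        fix i assume i: "i \<in> T0"
        then have it: "i < t" unfolding T0_def by simp
        have "e' i < d" using e'in i by (simp add: PiE_iff)
        moreover have "l i = 0" using i unfolding l_def by simp
        ultimately show "l i * d < offq q (u i) (f i) \<and> offq q (u i) (f i) \<le> l i * d + d"
          using offe[OF it] by simp
      qed
      have vvf: "vv m f (T0,u,l) = v"
      proof
        fix i show "vv m f (T0,u,l) i = v i"
        proof (cases "i < m")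
          case True
          then have "vv m f (T0,u,l) i = (if i \<in> T0 then u i else f i)" by (simp add: vv_def)
          also have "\<dots> = v i"
          proof (cases "i < t")
            case True then show ?thesis by (simp add: T0_def u_def)
          next
            case False then show ?thesis using \<open>i < m\<close> by (simp add: T0_def f_def)
          qed
          finally show ?thesis .
        next
          case False
          then have "vv m f (T0,u,l) i = undefined" by (simp add: vv_def)
          moreover have "v i = undefined" using v False unfolding R_def by (intro PiE_arb[of v]) auto
          ultimately show ?thesis by simp
        qed
      qed
      have eef: "ee q d f (T0,u,l) = e'"
      proof
        fix i show "ee q d f (T0,u,l) i = e' i"
        proof (cases "i \<in> T0")
          case True
          then have "ee q d f (T0,u,l) i = offq q (u i) (f i) - l i * d - 1" by (simp add: ee_def)
          also have "\<dots> = e' i" using offe[of i] True by (simp add: l_def T0_def)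
          finally show ?thesis .
        next
          case False
          then have "ee q d f (T0,u,l) i = undefined" by (simp add: ee_def)
          moreover have "e' i = undefined" using e'in False by (intro PiE_arb[of e']) auto
          ultimately show ?thesis by simp
        qed
      qed
      define j where "j = inv_into {..<q^m} \<rho> f"
      define k where "k = inv_into {..<K} \<kappa> (T0,u,l)"
      have j: "j < q^m" "\<rho> j = f" unfolding j_def
        using bij_betw_apply[OF bij_betw_inv_into[OF rho] fR] bij_betw_inv_into_right[OF rho fR]
        by auto
      have k: "k < K" "\<kappa> k = (T0,u,l)" unfolding k_def
        using bij_betw_apply[OF bij_betw_inv_into[OF kappa] cC] bij_betw_inv_into_right[OF kappa cC]
        by auto
      have "P j k = Some s" unfolding P_def using j k nsf vvf eef be' y ve by simp
      then show "\<exists>j<q^m. \<exists>k<K. P j k = Some s" using j k by blast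
    qed
  next
    show "\<forall>j1<q^m. \<forall>k1<K. \<forall>j2<q^m. \<forall>k2<K. \<forall>s.
        (j1, k1) \<noteq> (j2, k2) \<and> P j1 k1 = Some s \<and> P j2 k2 = Some s \<longrightarrow>
        j1 \<noteq> j2 \<and> k1 \<noteq> k2 \<and> P j1 k2 = None \<and> P j2 k1 = None"
    proof (intro allI impI)
      fix j1 k1 j2 k2 s
      assume j1: "j1 < q^m" and k1: "k1 < K" and j2: "j2 < q^m" and k2: "k2 < K"
        and H: "(j1, k1) \<noteq> (j2, k2) \<and> P j1 k1 = Some s \<and> P j2 k2 = Some s"
      obtain T1 u1 l1 where c1: "\<kappa> k1 = (T1,u1,l1)" by (metis prod_cases3)
      obtain T2 u2 l2 where c2: "\<kappa> k2 = (T2,u2,l2)" by (metis prod_cases3)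
      have C1: "(T1,u1,l1) \<in> C" using kin[OF k1] c1 by simp
      have C2: "(T2,u2,l2) \<in> C" using kin[OF k2] c2 by simp
      have ns1: "ns q d (\<rho> j1) (\<kappa> k1)" using H by (auto simp: P_def split: if_splits)
      have ns2: "ns q d (\<rho> j2) (\<kappa> k2)" using H by (auto simp: P_def split: if_splits)
      have "\<sigma> (vv m (\<rho> j1) (\<kappa> k1), \<beta> (fst (\<kappa> k1)) (ee q d (\<rho> j1) (\<kappa> k1)))
          = \<sigma> (vv m (\<rho> j2) (\<kappa> k2), \<beta> (fst (\<kappa> k2)) (ee q d (\<rho> j2) (\<kappa> k2)))"
        using H ns1 ns2 by (auto simp: P_def)
      then have symeq: "(vv m (\<rho> j1) (\<kappa> k1), \<beta> (fst (\<kappa> k1)) (ee q d (\<rho> j1) (\<kappa> k1)))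
          = (vv m (\<rho> j2) (\<kappa> k2), \<beta> (fst (\<kappa> k2)) (ee q d (\<rho> j2) (\<kappa> k2)))"
        by (rule inj_onD[OF bij_betw_imp_inj_on[OF sigma] _ symin2[OF j1 k1 ns1] symin2[OF j2 k2 ns2]])
      have T1TS: "T1 \<in> TS" using C1 by (simp add: memC TS_def)
      have eeq: "ee q d (\<rho> j1) (T1,u1,l1) = ee q d (\<rho> j2) (T2,u2,l2)" if "T1 = T2"
      proof -
        have "\<beta> T1 (ee q d (\<rho> j1) (T1,u1,l1)) = \<beta> T1 (ee q d (\<rho> j2) (T2,u2,l2))"
          using symeq c1 c2 that by simp
        moreover have "ee q d (\<rho> j1) (T1,u1,l1) \<in> PiE T1 (\<lambda>_. {..<d})"
          using symin[OF rin[OF j1] C1] ns1 c1 by simp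
        moreover have "ee q d (\<rho> j2) (T2,u2,l2) \<in> PiE T1 (\<lambda>_. {..<d})"
          using symin[OF rin[OF j2] C2] ns2 c2 that by simp
        ultimately show ?thesis by (rule inj_onD[OF bij_betw_imp_inj_on[OF beta[OF T1TS]]])
      qed
      have ne: "(\<rho> j1, (T1,u1,l1)) \<noteq> (\<rho> j2, (T2,u2,l2))"
      proof
        assume "(\<rho> j1, (T1,u1,l1)) = (\<rho> j2, (T2,u2,l2))"
        then have "\<rho> j1 = \<rho> j2" "\<kappa> k1 = \<kappa> k2" using c1 c2 by auto
        then have "j1 = j2" "k1 = k2"
          using inj_onD[OF bij_betw_imp_inj_on[OF rho]] inj_onD[OF bij_betw_imp_inj_on[OF kappa]]
            j1 j2 k1 k2 by auto
        then show False using H by simp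
      qed
      have R1: "\<rho> j1 \<in> PiE {..<m} (\<lambda>_. {..<q})" using rin[OF j1] R_def by simp
      have R2: "\<rho> j2 \<in> PiE {..<m} (\<lambda>_. {..<q})" using rin[OF j2] R_def by simp
      have cs1: "T1 \<subseteq> {..<m}" "card T1 = t" "u1 \<in> PiE T1 (\<lambda>_. {..<q})" "l1 \<in> PiE T1 (\<lambda>_. {..<a})"
        using C1 unfolding memC by simp_all
      have cs2: "T2 \<subseteq> {..<m}" "card T2 = t" "u2 \<in> PiE T2 (\<lambda>_. {..<q})" "l2 \<in> PiE T2 (\<lambda>_. {..<a})"
        using C2 unfolding memC by simp_all
      have res: "\<rho> j1 \<noteq> \<rho> j2 \<and> (T1,u1,l1) \<noteq> (T2,u2,l2) \<and> \<not> ns q d (\<rho> j1) (T2,u2,l2)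
          \<and> \<not> ns q d (\<rho> j2) (T1,u1,l1)"
        by (rule core[OF R1 R2 cs1 cs2 ns1[unfolded c1] ns2[unfolded c2] _ eeq ne])
           (use symeq c1 c2 in simp)
      then show "j1 \<noteq> j2 \<and> k1 \<noteq> k2 \<and> P j1 k2 = None \<and> P j2 k1 = None"
        using c1 c2 by (auto simp: P_def)
    qed
  qed
  then show ?thesis by (intro exI[of _ P]) (simp add: K_def S_def d_def a_def)
qed

end
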